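(* If degree sequences $e$ and $d$ satisfy $e\preccurlyeq d$ in the Rao order, then $\Delta^*(e)\le \Delta^*(d)$.
   Context: Degree sequences (of finite simple graphs with at least one vertex) are listed in nonincreasing order. For such $d$, $m(d)=\max\{i : d_i\ge i-1\}$ and, for integers $k\ge 0$, $\Delta_k(d)=k(k-1)+\sum_{i>k}\min\{k,d_i\}-\sum_{i\le k}d_i$; $\Delta^*(d)=\max\{\Delta_k(d):1\le k\le m(d)\}$. Rao order: $e\preccurlyeq d$ if there exist a realization $H$ of $e$ and a realization $G$ of $d$ such that $H$ is an induced subgraph of $G$. *)

theory Defs
  imports Main
begin

text \<open>E realizes the list d (of length n) if vertex i has degree d!i (vertex i corresponds to d_(i+1)).\<close>

definition realizes :: "(nat \<Rightarrow> nat \<Rightarrow> bool) \<Rightarrow> nat list \<Rightarrow> bool" where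
  "realizes E d \<longleftrightarrow>
     (\<forall>i j. E i j \<longrightarrow> i < length d \<and> j < length d) \<and>
     (\<forall>i j. E i j \<longrightarrow> E j i) \<and>
     (\<forall>i. \<not> E i i) \<and>
     (\<forall>i < length d. card {j. E i j} = d ! i)"

definition degree_seq :: "nat list \<Rightarrow> bool" where
  "degree_seq d \<longleftrightarrow> d \<noteq> [] \<and> sorted_wrt (\<ge>) d \<and> (\<exists>E. realizes E d)"

text \<open>1-indexed access: dd d i = d_i.\<close>
definition dd :: "nat list \<Rightarrow> nat \<Rightarrow> nat" where
  "dd d i = d ! (i - 1)"

definition m_index :: "nat list \<Rightarrow> nat" where
  "m_index d = Max {i \<in> {1..length d}. int (dd d i) \<ge> int i - 1}"

definition Delta :: "nat list \<Rightarrow> nat \<Rightarrow> int" where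
  "Delta d k = int k * (int k - 1)
     + (\<Sum>i\<in>{k+1..length d}. min (int k) (int (dd d i)))
     - (\<Sum>i\<in>{1..k}. int (dd d i))"

definition Delta_star :: "nat list \<Rightarrow> int" where
  "Delta_star d = Max ((\<lambda>k. Delta d k) ` {1..m_index d})"

text \<open>Rao order: some realization of e is (isomorphic to) an induced subgraph of some realization of d.\<close>
definition rao_le :: "nat list \<Rightarrow> nat list \<Rightarrow> bool" where
  "rao_le e d \<longleftrightarrow> (\<exists>H G f. realizes H e \<and> realizes G d \<and>
      inj_on f {..<length e} \<and> f ` {..<length e} \<subseteq> {..<length d} \<and>
      (\<forall>i < length e. \<forall>j < length e. H i j \<longleftrightarrow> G (f i) (f j)))"

end

theory Submission
  imports Defs
begin

definition deg :: "(nat \<Rightarrow> nat \<Rightarrow> bool) \<Rightarrow> nat set \<Rightarrow> nat \<Rightarrow> nat" where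
  "deg E X v = card {u\<in>X. E v u}"

definition delt :: "(nat \<Rightarrow> nat \<Rightarrow> bool) \<Rightarrow> nat set \<Rightarrow> nat set \<Rightarrow> int" where
  "delt E X T = int (card T) * (int (card T) - 1)
     + (\<Sum>v\<in>X-T. min (int (card T)) (int (deg E X v))) - (\<Sum>v\<in>T. int (deg E X v))"

definition topset :: "(nat \<Rightarrow> nat \<Rightarrow> bool) \<Rightarrow> nat set \<Rightarrow> nat set \<Rightarrow> bool" where
  "topset E X T \<longleftrightarrow> T \<subseteq> X \<and> (\<forall>a\<in>T. \<forall>b\<in>X-T. deg E X b \<le> deg E X a)"

definition good :: "(nat \<Rightarrow> nat \<Rightarrow> bool) \<Rightarrow> nat set \<Rightarrow> nat set \<Rightarrow> bool" where
  "good E X T \<longleftrightarrow> topset E X T \<and> T \<noteq> {} \<and> (\<forall>a\<in>T. card T \<le> deg E X a + 1)"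

lemma swap_lemma:
  assumes "finite X" "topset E X S" "topset E X T" "card S = card T" "a \<in> S - T"
  shows "\<exists>b\<in>T-S. deg E X b = deg E X a"
proof -
  have fS: "finite S" "finite T" using assms(1-3) unfolding topset_def by (auto intro: finite_subset)
  have "card (S - T) = card S - card (S \<inter> T)" using fS by (simp add: card_Diff_subset_Int)
  moreover have "card (T - S) = card T - card (S \<inter> T)" using fS by (metis card_Diff_subset_Int finite_Int inf_commute)
  ultimately have "card (T - S) = card (S - T)" using assms(4) by simp
  moreover have "card (S - T) > 0" using assms(5) fS by (auto simp: card_gt_0_iff)
  ultimately have "T - S \<noteq> {}" by (metis card.empty less_irrefl)
  then obtain b where b: "b \<in> T - S" by auto
  have "deg E X a \<le> deg E X b" using assms(2,3,5) b unfolding topset_def by auto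
  moreover have "deg E X b \<le> deg E X a" using assms(2,3,5) b unfolding topset_def by auto
  ultimately show ?thesis using b by (intro bexI[of _ b]) auto
qed

lemma sum_inv:
  fixes h :: "nat \<Rightarrow> int"
  assumes "finite X" "topset E X S" "topset E X T" "card S = card T"
  shows "(\<Sum>v\<in>S. h (deg E X v)) = (\<Sum>v\<in>T. h (deg E X v))"
proof (cases "S - T = {}")
  case True
  have fS: "finite S" "finite T" using assms(1-3) unfolding topset_def by (auto intro: finite_subset)
  then have "S = T" using True assms(4) by (metis Diff_eq_empty_iff card_subset_eq)
  then show ?thesis by simp
next
  case False
  have fS: "finite S" "finite T" using assms(1-3) unfolding topset_def by (auto intro: finite_subset)
  obtain a0 where a0: "a0 \<in> S - T" using False by auto
  obtain b0 where b0: "b0 \<in> T - S" "deg E X b0 = deg E X a0" using swap_lemma[OF assms a0] by auto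
  have c1: "\<forall>a\<in>S-T. deg E X a = deg E X a0"
  proof
    fix a assume a: "a \<in> S - T"
    have X: "a \<in> X" "b0 \<in> X" using assms(2,3) a b0 unfolding topset_def by auto
    have "deg E X a \<le> deg E X b0" using assms(3) a b0(1) X unfolding topset_def by blast
    moreover have "deg E X b0 \<le> deg E X a" using assms(2) a b0(1) X unfolding topset_def by blast
    ultimately have "deg E X a = deg E X b0" by simp
    then show "deg E X a = deg E X a0" using b0 by simp
  qed
  have c2: "\<forall>b\<in>T-S. deg E X b = deg E X a0"
  proof
    fix b assume b: "b \<in> T - S"
    have X: "a0 \<in> X" "b \<in> X" using assms(2,3) a0 b unfolding topset_def by auto
    have "deg E X a0 \<le> deg E X b" using assms(3) a0 b X unfolding topset_def by blast
    moreover have "deg E X b \<le> deg E X a0" using assms(2) a0 b X unfolding topset_def by blast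
    ultimately have "deg E X b = deg E X a0" by simp
    then show "deg E X b = deg E X a0" by simp
  qed
  have cd: "card (T - S) = card (S - T)"
  proof -
    have "card (S - T) = card S - card (S \<inter> T)" using fS by (simp add: card_Diff_subset_Int)
    moreover have "card (T - S) = card T - card (S \<inter> T)" using fS by (metis card_Diff_subset_Int finite_Int inf_commute)
    ultimately show ?thesis using assms(4) by simp
  qed
  have "(\<Sum>v\<in>S. h (deg E X v)) = (\<Sum>v\<in>S \<inter> T. h (deg E X v)) + (\<Sum>v\<in>S - T. h (deg E X v))"
    using fS by (simp add: sum.Int_Diff)
  also have "(\<Sum>v\<in>S - T. h (deg E X v)) = (\<Sum>v\<in>S - T. h (deg E X a0))" using c1 by (intro sum.cong) auto
  also have "\<dots> = (\<Sum>v\<in>T - S. h (deg E X a0))" using cd by simp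
  also have "\<dots> = (\<Sum>v\<in>T - S. h (deg E X v))" using c2 by (intro sum.cong) auto
  also have "(\<Sum>v\<in>S \<inter> T. h (deg E X v)) + \<dots> = (\<Sum>v\<in>T. h (deg E X v))"
    using fS by (metis inf_commute sum.Int_Diff)
  finally show ?thesis .
qed

lemma delt_inv:
  assumes "finite X" "topset E X S" "topset E X T" "card S = card T"
  shows "delt E X S = delt E X T"
proof -
  have sub: "S \<subseteq> X" "T \<subseteq> X" using assms unfolding topset_def by auto
  let ?k = "int (card S)"
  have "(\<Sum>v\<in>X-S. min ?k (int (deg E X v))) = (\<Sum>v\<in>X. min ?k (int (deg E X v))) - (\<Sum>v\<in>S. min ?k (int (deg E X v)))"
    using assms(1) sub by (simp add: sum_diff)
  moreover have "(\<Sum>v\<in>X-T. min ?k (int (deg E X v))) = (\<Sum>v\<in>X. min ?k (int (deg E X v))) - (\<Sum>v\<in>T. min ?k (int (deg E X v)))"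
    using assms(1) sub by (simp add: sum_diff)
  moreover have "(\<Sum>v\<in>S. min ?k (int (deg E X v))) = (\<Sum>v\<in>T. min ?k (int (deg E X v)))"
    using sum_inv[OF assms, of "\<lambda>x. min ?k (int x)"] by simp
  moreover have "(\<Sum>v\<in>S. int (deg E X v)) = (\<Sum>v\<in>T. int (deg E X v))"
    using sum_inv[OF assms, of "\<lambda>x. int x"] by simp
  ultimately show ?thesis unfolding delt_def using assms(4) by simp
qed

lemma exists_top_key:
  fixes f :: "nat \<Rightarrow> nat"
  assumes "finite U" "k \<le> card U"
  shows "\<exists>S\<subseteq>U. card S = k \<and> (\<forall>a\<in>S. \<forall>b\<in>U-S. f b \<le> f a)"
  using assms(2)
proof (induction k)
  case 0
  then show ?case by (intro exI[of _ "{}"]) auto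
next
  case (Suc k)
  then obtain S where S: "S \<subseteq> U" "card S = k" "\<forall>a\<in>S. \<forall>b\<in>U-S. f b \<le> f a" by auto
  have fS: "finite S" using S(1) assms(1) finite_subset by auto
  have "card S < card U" using Suc S by auto
  then have ne: "U - S \<noteq> {}" using S(1) by auto
  have fin: "finite (f ` (U - S))" using assms(1) by auto
  have "Max (f ` (U - S)) \<in> f ` (U - S)" using ne fin by (intro Max_in) auto
  then obtain m where m: "m \<in> U - S" "f m = Max (f ` (U - S))" by auto
  have mx: "\<forall>b\<in>U-S. f b \<le> f m" using m fin by auto
  show ?case
  proof (intro exI[of _ "insert m S"] conjI)
    show "insert m S \<subseteq> U" using m S by auto
    show "card (insert m S) = Suc k" using m S fS by auto
    show "\<forall>a\<in>insert m S. \<forall>b\<in>U - insert m S. f b \<le> f a" using mx S(3) by auto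
  qed
qed

lemma deg_insert:
  assumes "finite U" "w \<notin> U"
  shows "int (deg E (insert w U) v) = int (deg E U v) + (if E v w then 1 else 0)"
proof (cases "E v w")
  case True
  then have "{u\<in>insert w U. E v u} = insert w {u\<in>U. E v u}" by auto
  then show ?thesis using True assms unfolding deg_def by simp
next
  case False
  then have "{u\<in>insert w U. E v u} = {u\<in>U. E v u}" by auto
  then show ?thesis using False unfolding deg_def by simp
qed

lemma deg_w:
  assumes "\<forall>u. \<not> E u u"
  shows "deg E (insert w U) w = deg E U w"
proof -
  have "{u\<in>insert w U. E w u} = {u\<in>U. E w u}" using assms by auto
  then show ?thesis unfolding deg_def by simp
qed

lemma card_split:
  assumes "finite U" "A \<subseteq> U"
  shows "card {u\<in>U. P u} = card {u\<in>A. P u} + card {u\<in>U-A. P u}"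
proof -
  have "{u\<in>U. P u} = {u\<in>A. P u} \<union> {u\<in>U-A. P u}" using assms by auto
  moreover have "finite {u\<in>A. P u}" "finite {u\<in>U-A. P u}" using assms by (auto intro: rev_finite_subset)
  ultimately show ?thesis by (metis (no_types, lifting) card_Un_disjoint disjoint_iff mem_Collect_eq DiffD2)
qed

lemma ind_sum:
  assumes "finite A"
  shows "(\<Sum>v\<in>A. (if P v then 1 else 0::int)) = int (card {v\<in>A. P v})"
proof -
  have "(\<Sum>v\<in>{v\<in>A. P v}. (1::int)) = (\<Sum>v\<in>A. (if P v then 1 else 0::int))"
    by (rule sum.inter_filter[OF assms])
  then show ?thesis by simp
qed

lemma sumd:
  assumes "finite U" "w \<notin> U" "A \<subseteq> U" "\<forall>u v. E u v \<longrightarrow> E v u"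
  shows "(\<Sum>v\<in>A. int (deg E (insert w U) v)) = (\<Sum>v\<in>A. int (deg E U v)) + int (card {v\<in>A. E w v})"
proof -
  have fA: "finite A" using assms by (auto intro: rev_finite_subset)
  have "(\<Sum>v\<in>A. int (deg E (insert w U) v)) = (\<Sum>v\<in>A. int (deg E U v) + (if E v w then 1 else 0))"
    using deg_insert[OF assms(1,2)] by simp
  also have "\<dots> = (\<Sum>v\<in>A. int (deg E U v)) + (\<Sum>v\<in>A. (if E v w then 1 else 0::int))"
    by (simp add: sum.distrib)
  also have "(\<Sum>v\<in>A. (if E v w then 1 else 0::int)) = int (card {v\<in>A. E v w})"
    using ind_sum[OF fA] by simp
  also have "{v\<in>A. E v w} = {v\<in>A. E w v}" using assms(4) by blast
  finally show ?thesis .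
qed

lemma degw_eq:
  assumes "\<forall>u. \<not> E u u"
  shows "deg E (insert w U) w = card {v\<in>U. E w v}"
  using deg_w[where E=E and w=w and U=U, OF assms] unfolding deg_def by simp

lemma lemA:
  assumes "finite U" "w \<notin> U" "S \<subseteq> U" "\<forall>u v. E u v \<longrightarrow> E v u" "\<forall>u. \<not> E u u"
  shows "delt E U S \<le> delt E (insert w U) S"
proof -
  let ?X = "insert w U"
  let ?k = "int (card S)"
  have fS: "finite S" using assms by (auto intro: rev_finite_subset)
  have XS: "?X - S = insert w (U - S)" using assms by auto
  have s1: "(\<Sum>v\<in>?X-S. min ?k (int (deg E ?X v))) = min ?k (int (deg E ?X w)) + (\<Sum>v\<in>U-S. min ?k (int (deg E ?X v)))"
    unfolding XS using assms by (subst sum.insert) auto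
  have s2: "(\<Sum>v\<in>U-S. min ?k (int (deg E U v))) \<le> (\<Sum>v\<in>U-S. min ?k (int (deg E ?X v)))"
    by (intro sum_mono) (use deg_insert[OF assms(1,2)] in force)
  have s3: "(\<Sum>v\<in>S. int (deg E ?X v)) = (\<Sum>v\<in>S. int (deg E U v)) + int (card {v\<in>S. E w v})"
    using sumd[OF assms(1,2,3,4)] .
  have c1: "card {v\<in>S. E w v} \<le> card S" using fS by (intro card_mono) auto
  have c2: "card {v\<in>S. E w v} \<le> card {v\<in>U. E w v}" using assms(1,3) by (intro card_mono) auto
  have dw: "deg E ?X w = card {v\<in>U. E w v}" using degw_eq[where E=E and w=w and U=U, OF assms(5)] .
  have D1: "delt E ?X S = ?k * (?k - 1) + (\<Sum>v\<in>?X-S. min ?k (int (deg E ?X v))) - (\<Sum>v\<in>S. int (deg E ?X v))"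
    unfolding delt_def ..
  have D2: "delt E U S = ?k * (?k - 1) + (\<Sum>v\<in>U-S. min ?k (int (deg E U v))) - (\<Sum>v\<in>S. int (deg E U v))"
    unfolding delt_def ..
  have "int (card {v\<in>S. E w v}) \<le> min ?k (int (deg E ?X w))" using c1 c2 dw by simp
  then show ?thesis using D1 D2 s1 s2 s3 by linarith
qed

lemma lemB:
  assumes "finite U" "w \<notin> U" "S \<subseteq> U" "\<forall>u v. E u v \<longrightarrow> E v u" "\<forall>u. \<not> E u u"
  shows "delt E U S \<le> delt E (insert w U) (insert w S)"
proof -
  let ?X = "insert w U"
  let ?k = "int (card S)"
  have fS: "finite S" using assms by (auto intro: rev_finite_subset)
  have fO: "finite (U - S)" using assms by auto
  have wS: "w \<notin> S" using assms by auto
  have ck: "int (card (insert w S)) = ?k + 1" using fS wS by simp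
  have XS: "?X - insert w S = U - S" using assms by auto
  have s2: "(\<Sum>v\<in>U-S. min ?k (int (deg E U v)) + (if E v w then 1 else 0)) \<le> (\<Sum>v\<in>U-S. min (?k+1) (int (deg E ?X v)))"
  proof (rule sum_mono)
    fix v
    have "int (deg E ?X v) = int (deg E U v) + (if E v w then 1 else 0)" by (rule deg_insert[OF assms(1,2)])
    then show "min ?k (int (deg E U v)) + (if E v w then 1 else 0) \<le> min (?k+1) (int (deg E ?X v))" by auto
  qed
  have s2': "(\<Sum>v\<in>U-S. min ?k (int (deg E U v)) + (if E v w then 1 else 0)) = (\<Sum>v\<in>U-S. min ?k (int (deg E U v))) + int (card {v\<in>U-S. E v w})"
    by (simp only: sum.distrib ind_sum[OF fO])
  have sy: "{v\<in>U-S. E v w} = {v\<in>U-S. E w v}" using assms(4) by blast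
  have s3a: "(\<Sum>v\<in>insert w S. int (deg E ?X v)) = int (deg E ?X w) + (\<Sum>v\<in>S. int (deg E ?X v))"
    by (rule sum.insert[OF fS wS])
  have s3: "(\<Sum>v\<in>S. int (deg E ?X v)) = (\<Sum>v\<in>S. int (deg E U v)) + int (card {v\<in>S. E w v})"
    by (rule sumd[OF assms(1,2,3,4)])
  have c1: "card {v\<in>S. E w v} \<le> card S" using fS by (intro card_mono) auto
  have dw0: "deg E ?X w = card {v\<in>U. E w v}" by (rule degw_eq[where E=E and w=w and U=U, OF assms(5)])
  have dw1: "card {v\<in>U. E w v} = card {v\<in>S. E w v} + card {v\<in>U-S. E w v}"
    by (rule card_split[OF assms(1,3)])
  have alg: "(?k + 1) * (?k + 1 - 1) = ?k * (?k - 1) + 2 * ?k" by (simp add: algebra_simps)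
  have D1: "delt E ?X (insert w S) = (?k + 1) * (?k + 1 - 1) + (\<Sum>v\<in>U-S. min (?k+1) (int (deg E ?X v))) - (\<Sum>v\<in>insert w S. int (deg E ?X v))"
    unfolding delt_def XS ck ..
  have D2: "delt E U S = ?k * (?k - 1) + (\<Sum>v\<in>U-S. min ?k (int (deg E U v))) - (\<Sum>v\<in>S. int (deg E U v))"
    unfolding delt_def ..
  have dw': "int (deg E ?X w) = int (card {v\<in>S. E w v}) + int (card {v\<in>U-S. E v w})" using dw0 dw1 sy by simp
  have c1': "int (card {v\<in>S. E w v}) \<le> ?k" using c1 by simp
  show ?thesis using D1 D2 s2 s2' s3a s3 c1' dw' alg by linarith
qed

lemma lemC:
  assumes "finite U" "w \<notin> U" "R \<subseteq> U" "a1 \<in> U" "a1 \<notin> R"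
    "\<forall>u v. E u v \<longrightarrow> E v u" "\<forall>u. \<not> E u u"
    "\<not> E a1 w" "deg E U a1 = card R"
    "\<forall>b\<in>U - insert a1 R. deg E (insert w U) b \<le> card R"
  shows "delt E U (insert a1 R) \<le> delt E (insert w U) (insert w R)"
proof -
  let ?X = "insert w U"
  let ?T1 = "insert a1 R"
  let ?O = "U - ?T1"
  let ?k = "int (card R) + 1"
  have fR: "finite R" using assms by (auto intro: rev_finite_subset)
  have fO: "finite ?O" using assms by auto
  have wR: "w \<notin> R" "w \<noteq> a1" using assms by auto
  have ck1: "int (card ?T1) = ?k" using fR assms(5) by simp
  have ck2: "int (card (insert w R)) = ?k" using fR wR by simp
  have XT: "?X - insert w R = insert a1 ?O" using assms wR by auto
  have a1O: "a1 \<notin> ?O" by simp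
  have da0: "int (deg E ?X a1) = int (deg E U a1) + (if E a1 w then 1 else 0)" by (rule deg_insert[OF assms(1,2)])
  have da1: "int (deg E ?X a1) = int (card R)" using da0 assms(8,9) by simp
  have m1: "(\<Sum>v\<in>?O. min ?k (int (deg E U v))) = (\<Sum>v\<in>?O. int (deg E U v))"
  proof (rule sum.cong[OF refl])
    fix v assume v: "v \<in> ?O"
    have "int (deg E ?X v) = int (deg E U v) + (if E v w then 1 else 0)" by (rule deg_insert[OF assms(1,2)])
    moreover have "deg E ?X v \<le> card R" using assms(10) v by blast
    ultimately show "min ?k (int (deg E U v)) = int (deg E U v)" by (auto split: if_splits)
  qed
  have m2: "(\<Sum>v\<in>?O. min ?k (int (deg E ?X v))) = (\<Sum>v\<in>?O. int (deg E ?X v))"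
  proof (rule sum.cong[OF refl])
    fix v assume v: "v \<in> ?O"
    have "deg E ?X v \<le> card R" using assms(10) v by blast
    then show "min ?k (int (deg E ?X v)) = int (deg E ?X v)" by simp
  qed
  have subO: "?O \<subseteq> U" by blast
  have sO: "(\<Sum>v\<in>?O. int (deg E ?X v)) = (\<Sum>v\<in>?O. int (deg E U v)) + int (card {v\<in>?O. E w v})"
    by (rule sumd[OF assms(1,2) subO assms(6)])
  have sR: "(\<Sum>v\<in>R. int (deg E ?X v)) = (\<Sum>v\<in>R. int (deg E U v)) + int (card {v\<in>R. E w v})"
    by (rule sumd[OF assms(1,2,3,6)])
  have c1: "card {v\<in>R. E w v} \<le> card R" using fR by (intro card_mono) auto
  have sub: "?T1 \<subseteq> U" using assms(3,4) by blast
  have dw0: "deg E ?X w = card {v\<in>U. E w v}" by (rule degw_eq[where E=E and w=w and U=U, OF assms(7)])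
  have dw1: "card {v\<in>U. E w v} = card {v\<in>?T1. E w v} + card {v\<in>?O. E w v}"
    by (rule card_split[OF assms(1) sub])
  have "\<not> E w a1" using assms(6,8) by blast
  then have "{v\<in>?T1. E w v} = {v\<in>R. E w v}" by auto
  then have dw': "int (deg E ?X w) = int (card {v\<in>R. E w v}) + int (card {v\<in>?O. E w v})" using dw0 dw1 by simp
  have sT1: "(\<Sum>v\<in>?T1. int (deg E U v)) = int (deg E U a1) + (\<Sum>v\<in>R. int (deg E U v))"
    by (rule sum.insert[OF fR assms(5)])
  have e1: "delt E U ?T1 = ?k * (?k - 1) + (\<Sum>v\<in>?O. min ?k (int (deg E U v))) - (\<Sum>v\<in>?T1. int (deg E U v))"
    unfolding delt_def ck1 ..
  have sA: "(\<Sum>v\<in>insert a1 ?O. min ?k (int (deg E ?X v))) = min ?k (int (deg E ?X a1)) + (\<Sum>v\<in>?O. min ?k (int (deg E ?X v)))"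
    by (rule sum.insert[OF fO a1O])
  have sB: "(\<Sum>v\<in>insert w R. int (deg E ?X v)) = int (deg E ?X w) + (\<Sum>v\<in>R. int (deg E ?X v))"
    by (rule sum.insert[OF fR wR(1)])
  have e2: "delt E ?X (insert w R) = ?k * (?k - 1) + (\<Sum>v\<in>insert a1 ?O. min ?k (int (deg E ?X v))) - (\<Sum>v\<in>insert w R. int (deg E ?X v))"
    unfolding delt_def ck2 XT ..
  have mn: "min ?k (int (deg E ?X a1)) = int (card R)" using da1 by simp
  have c1': "int (card {v\<in>R. E w v}) \<le> int (card R)" using c1 by simp
  show ?thesis using e1 e2 sA sB mn m1 m2 sO sR c1' dw' sT1 assms(9) by linarith
qed

lemma step:
  assumes fU: "finite U" and wU: "w \<notin> U" and sym: "\<forall>u v. E u v \<longrightarrow> E v u" and irr: "\<forall>u. \<not> E u u"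
    and gS: "good E U S"
  shows "\<exists>T. good E (insert w U) T \<and> delt E U S \<le> delt E (insert w U) T"
proof -
  define X where "X = insert w U"
  define k where "k = card S"
  have S: "S \<subseteq> U" "S \<noteq> {}" "\<forall>a\<in>S. \<forall>b\<in>U-S. deg E U b \<le> deg E U a" "\<forall>a\<in>S. k \<le> deg E U a + 1"
    using gS unfolding good_def topset_def k_def by auto
  have fS: "finite S" using S(1) fU by (auto intro: rev_finite_subset)
  have kU: "k \<le> card U" unfolding k_def using S(1) fU by (rule card_mono[rotated])
  have k1: "k \<ge> 1" unfolding k_def using S(2) fS by (simp add: Suc_leI card_gt_0_iff)
  have di: "\<And>v. int (deg E X v) = int (deg E U v) + (if E v w then 1 else 0)"
    unfolding X_def by (rule deg_insert[OF fU wU])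
  have dge: "\<And>v. deg E U v \<le> deg E X v"
  proof -
    fix v
    have "int (deg E U v) \<le> int (deg E X v)" using di[of v] by simp
    then show "deg E U v \<le> deg E X v" by simp
  qed
  define key where "key v = 2 * deg E U v + (if E v w then 1 else 0)" for v
  obtain S' where S': "S' \<subseteq> U" "card S' = k" "\<forall>a\<in>S'. \<forall>b\<in>U-S'. key b \<le> key a"
    using exists_top_key[OF fU kU] by blast
  have etop: "\<forall>a\<in>S'. \<forall>b\<in>U-S'. deg E U b \<le> deg E U a"
  proof (intro ballI)
    fix a b assume "a \<in> S'" "b \<in> U - S'"
    then have "key b \<le> key a" using S'(3) by blast
    then show "deg E U b \<le> deg E U a" unfolding key_def by (cases "E a w"; cases "E b w") simp_all
  qed
  have dtop: "\<forall>a\<in>S'. \<forall>b\<in>U-S'. deg E X b \<le> deg E X a"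
  proof (intro ballI)
    fix a b assume "a \<in> S'" "b \<in> U - S'"
    then have "key b \<le> key a" using S'(3) by blast
    moreover have "int (deg E X a) = int (deg E U a) + (if E a w then 1 else 0)" by (rule di)
    moreover have "int (deg E X b) = int (deg E U b) + (if E b w then 1 else 0)" by (rule di)
    ultimately have "int (deg E X b) \<le> int (deg E X a)" unfolding key_def by (cases "E a w"; cases "E b w") simp_all
    then show "deg E X b \<le> deg E X a" by simp
  qed
  have top1: "topset E U S'" unfolding topset_def using S'(1) etop by blast
  have top0: "topset E U S" unfolding topset_def using S(1,3) by blast
  have cc: "card S' = card S" using S'(2) k_def by simp
  have dS: "delt E U S' = delt E U S" by (rule delt_inv[OF fU top1 top0 cc])
  have gS': "\<forall>a\<in>S'. k \<le> deg E U a + 1"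
  proof
    fix a assume a: "a \<in> S'"
    show "k \<le> deg E U a + 1"
    proof (cases "a \<in> S")
      case True then show ?thesis using S(4) by blast
    next
      case False
      then obtain b where "b \<in> S - S'" "deg E U b = deg E U a"
        using swap_lemma[OF fU top1 top0 cc, of a] a by blast
      then show ?thesis using S(4) by auto
    qed
  qed
  have fS': "finite S'" using S'(1) fU by (auto intro: rev_finite_subset)
  have ne: "S' \<noteq> {}" using S'(2) k1 by auto
  have wS': "w \<notin> S'" using S'(1) wU by blast
  show ?thesis
  proof (cases "\<forall>a\<in>S'. deg E X w \<le> deg E X a")
    case True
    have "good E X S'" unfolding good_def topset_def
    proof (intro conjI ballI)
      show "S' \<subseteq> X" using S'(1) X_def by blast
      show "S' \<noteq> {}" by (rule ne)
    next
      fix a b assume a: "a \<in> S'" and b: "b \<in> X - S'"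
      show "deg E X b \<le> deg E X a"
      proof (cases "b = w")
        case True then show ?thesis using \<open>\<forall>a\<in>S'. deg E X w \<le> deg E X a\<close> a by blast
      next
        case False then have "b \<in> U - S'" using b X_def by blast
        then show ?thesis using dtop a by blast
      qed
    next
      fix a assume a: "a \<in> S'"
      have "k \<le> deg E U a + 1" using gS' a by blast
      then show "card S' \<le> deg E X a + 1" using dge[of a] S'(2) by linarith
    qed
    moreover have "delt E U S' \<le> delt E X S'" unfolding X_def by (rule lemA[OF fU wU S'(1) sym irr])
    ultimately show ?thesis using dS X_def by auto
  next
    case False
    then obtain a0 where a0: "a0 \<in> S'" "deg E X a0 < deg E X w" by force
    show ?thesis
    proof (cases "\<forall>a\<in>S'. k \<le> deg E X a")
      case True
      have ck: "card (insert w S') = k + 1" using fS' wS' S'(2) by simp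
      have "good E X (insert w S')" unfolding good_def topset_def ck
      proof (intro conjI ballI)
        show "insert w S' \<subseteq> X" using S'(1) X_def by blast
        show "insert w S' \<noteq> {}" by blast
      next
        fix a b assume a: "a \<in> insert w S'" and b: "b \<in> X - insert w S'"
        have bU: "b \<in> U - S'" using b X_def by blast
        show "deg E X b \<le> deg E X a"
        proof (cases "a = w")
          case True
          have "deg E X b \<le> deg E X a0" using dtop a0(1) bU by blast
          then show ?thesis using a0(2) True by simp
        next
          case False then have "a \<in> S'" using a by blast
          then show ?thesis using dtop bU by blast
        qed
      next
        fix a assume a: "a \<in> insert w S'"
        show "k + 1 \<le> deg E X a + 1"
        proof (cases "a = w")
          case True
          have "k \<le> deg E X a0" using \<open>\<forall>a\<in>S'. k \<le> deg E X a\<close> a0(1) by blast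
          then show ?thesis using a0(2) True by simp
        next
          case False then have "a \<in> S'" using a by blast
          then show ?thesis using \<open>\<forall>a\<in>S'. k \<le> deg E X a\<close> by simp
        qed
      qed
      moreover have "delt E U S' \<le> delt E X (insert w S')" unfolding X_def by (rule lemB[OF fU wU S'(1) sym irr])
      ultimately show ?thesis using dS X_def by auto
    next
      case False
      then obtain a1 where a1: "a1 \<in> S'" "deg E X a1 < k" by force
      have h1: "k \<le> deg E U a1 + 1" using gS' a1(1) by blast
      have h2: "int (deg E X a1) = int (deg E U a1) + (if E a1 w then 1 else 0)" by (rule di)
      have nE: "\<not> E a1 w"
      proof
        assume "E a1 w"
        then have "int (deg E X a1) = int (deg E U a1) + 1" using h2 by simp
        then show False using h1 a1(2) by linarith
      qed
      have dU1: "deg E U a1 + 1 = k" using h1 h2 a1(2) nE by simp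
      have dX1: "deg E X a1 = deg E U a1" using h2 nE by simp
      define R where "R = S' - {a1}"
      have fR: "finite R" using fS' R_def by simp
      have cR: "card R + 1 = k" using R_def a1(1) fS' S'(2) k1 by (simp add: card_Diff_singleton)
      have RU: "R \<subseteq> U" using R_def S'(1) by blast
      have a1U: "a1 \<in> U" using a1(1) S'(1) by blast
      have a1R: "a1 \<notin> R" using R_def by blast
      have ins: "insert a1 R = S'" using R_def a1(1) by blast
      have wR: "w \<notin> R" using wS' R_def by blast
      have degR: "deg E U a1 = card R" using dU1 cR by simp
      have outs: "\<forall>b\<in>U - insert a1 R. deg E X b \<le> card R"
      proof
        fix b assume "b \<in> U - insert a1 R"
        then have "b \<in> U - S'" using ins by simp
        then have "deg E X b \<le> deg E X a1" using dtop a1(1) by blast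
        then show "deg E X b \<le> card R" using dX1 degR by simp
      qed
      have lc: "delt E U (insert a1 R) \<le> delt E X (insert w R)"
        unfolding X_def by (rule lemC[OF fU wU RU a1U a1R sym irr nE degR outs[unfolded X_def]])
      have ck: "card (insert w R) = k" using fR wR cR by simp
      have inner: "\<forall>a\<in>insert w R. card R \<le> deg E X a"
      proof
        fix a assume a: "a \<in> insert w R"
        show "card R \<le> deg E X a"
        proof (cases "a = w")
          case True
          have "k \<le> deg E U a0 + 1" using gS' a0(1) by blast
          then show ?thesis using dge[of a0] a0(2) cR unfolding True by linarith
        next
          case False then have "a \<in> S'" using a R_def by blast
          then have "k \<le> deg E U a + 1" using gS' by blast
          then show ?thesis using dge[of a] cR by linarith
        qed
      qed
      have "good E X (insert w R)" unfolding good_def topset_def ck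
      proof (intro conjI ballI)
        show "insert w R \<subseteq> X" using RU X_def by blast
        show "insert w R \<noteq> {}" by blast
      next
        fix a b assume a: "a \<in> insert w R" and b: "b \<in> X - insert w R"
        have "b \<in> U - insert a1 R \<or> b = a1" using b X_def by blast
        then have "deg E X b \<le> card R" using outs dX1 degR by auto
        moreover have "card R \<le> deg E X a" using inner a by blast
        ultimately show "deg E X b \<le> deg E X a" by linarith
      next
        fix a assume a: "a \<in> insert w R"
        then have "card R \<le> deg E X a" using inner by blast
        then show "k \<le> deg E X a + 1" using cR by linarith
      qed
      then show ?thesis using lc ins dS X_def by auto
    qed
  qed
qed

lemma main_ind:
  assumes fV: "finite V" and sym: "\<forall>u v. E u v \<longrightarrow> E v u" and irr: "\<forall>u. \<not> E u u"
  shows "U \<subseteq> V \<Longrightarrow> good E U S \<Longrightarrow> \<exists>T. good E V T \<and> delt E U S \<le> delt E V T"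
proof (induction "card (V - U)" arbitrary: U S rule: less_induct)
  case less
  show ?case
  proof (cases "U = V")
    case True then show ?thesis using less.prems by auto
  next
    case False
    then obtain w where w: "w \<in> V" "w \<notin> U" using less.prems(1) by auto
    have fU: "finite U" using less.prems(1) fV by (auto intro: rev_finite_subset)
    obtain T' where T': "good E (insert w U) T'" "delt E U S \<le> delt E (insert w U) T'"
      using step[OF fU w(2) sym irr less.prems(2)] by blast
    have "V - insert w U \<subset> V - U" using w by blast
    then have lt: "card (V - insert w U) < card (V - U)" using fV by (simp add: psubset_card_mono)
    have sub: "insert w U \<subseteq> V" using w less.prems(1) by blast
    obtain T where "good E V T" "delt E (insert w U) T' \<le> delt E V T"
      using less.hyps[OF lt sub T'(1)] by blast
    then show ?thesis using T'(2) by force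
  qed
qed

lemma sorted_le:
  fixes d :: "nat list"
  assumes "sorted_wrt (\<ge>) d" "i \<le> j" "j < length d"
  shows "d!j \<le> d!i"
proof (cases "i = j")
  case True then show ?thesis by simp
next
  case False then have "i < j" using assms(2) by simp
  then show ?thesis using sorted_wrt_nth_less[OF assms(1) _ assms(3)] by simp
qed

lemma conn_top:
  assumes srt: "sorted_wrt (\<ge>) d" and X: "X = g ` {..<length d}"
    and dg: "\<forall>i<length d. deg E X (g i) = d!i" and k: "k \<le> length d"
  shows "topset E X (g ` {..<k})"
  unfolding topset_def
proof (intro conjI ballI)
  show "g ` {..<k} \<subseteq> X" using X k by auto
next
  fix a b assume a: "a \<in> g ` {..<k}" and b: "b \<in> X - g ` {..<k}"
  obtain i where i: "i < k" "a = g i" using a by auto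
  obtain j where j: "j < length d" "b = g j" using b X by auto
  have "\<not> j < k" using b j by auto
  then have "d!j \<le> d!i" using sorted_le[OF srt, of i j] i j by simp
  then show "deg E X b \<le> deg E X a" using dg i j k by simp
qed

lemma sum_shift:
  "(\<Sum>i\<in>{Suc a..b}. h i) = (\<Sum>j\<in>{a..<b}. h (Suc j))"
proof -
  have "{Suc a..b} = Suc ` {a..<b}"
    by (metis atLeastLessThanSuc_atLeastAtMost image_Suc_atLeastLessThan)
  moreover have "sum h (Suc ` {a..<b}) = sum (h \<circ> Suc) {a..<b}" by (rule sum.reindex) simp
  ultimately show ?thesis by simp
qed

lemma conn_delt:
  assumes inj: "inj_on g {..<length d}" and X: "X = g ` {..<length d}"
    and dg: "\<forall>i<length d. deg E X (g i) = d!i" and k: "k \<le> length d"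
  shows "delt E X (g ` {..<k}) = Delta d k"
proof -
  let ?n = "length d"
  have injk: "inj_on g {..<k}" using inj k by (auto intro: inj_on_subset)
  have ck: "card (g ` {..<k}) = k" using injk by (simp add: card_image)
  have XD: "X - g ` {..<k} = g ` {k..<?n}"
  proof -
    have "g ` ({..<?n} - {..<k}) = g ` {..<?n} - g ` {..<k}"
      by (rule inj_on_image_set_diff[OF inj]) (use k in auto)
    moreover have "{..<?n} - {..<k} = {k..<?n}" by auto
    ultimately show ?thesis using X by simp
  qed
  have injr: "inj_on g {k..<?n}" using inj by (auto intro: inj_on_subset)
  have s1: "(\<Sum>v\<in>g ` {k..<?n}. min (int k) (int (deg E X v))) = (\<Sum>j\<in>{k..<?n}. min (int k) (int (d!j)))"
    using dg by (simp add: sum.reindex[OF injr])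
  have s2: "(\<Sum>v\<in>g ` {..<k}. int (deg E X v)) = (\<Sum>j\<in>{..<k}. int (d!j))"
    using dg k by (simp add: sum.reindex[OF injk])
  have t1: "(\<Sum>i\<in>{k+1..?n}. min (int k) (int (dd d i))) = (\<Sum>j\<in>{k..<?n}. min (int k) (int (d!j)))"
    using sum_shift[where a=k and b="length d" and h="\<lambda>i. min (int k) (int (dd d i))"] by (simp add: dd_def)
  have t2: "(\<Sum>i\<in>{1..k}. int (dd d i)) = (\<Sum>j\<in>{..<k}. int (d!j))"
    using sum_shift[where a=0 and b=k and h="\<lambda>i. int (dd d i)"] by (simp add: dd_def atLeast0LessThan)
  show ?thesis unfolding delt_def Delta_def ck XD s1 s2 t1 t2 ..
qed

lemma conn_m:
  assumes srt: "sorted_wrt (\<ge>) d" and ne: "d \<noteq> []"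
  shows "k \<in> {1..m_index d} \<longleftrightarrow> 1 \<le> k \<and> k \<le> length d \<and> k \<le> d!(k-1) + 1"
proof -
  define M where "M = {i \<in> {1..length d}. int (dd d i) \<ge> int i - 1}"
  have fM: "finite M" unfolding M_def by simp
  have "1 \<le> length d" using ne by (cases d) auto
  then have 1: "1 \<in> M" unfolding M_def dd_def by auto
  have mM: "m_index d = Max M" unfolding m_index_def M_def ..
  have MM: "Max M \<in> M" using fM 1 by (intro Max_in) auto
  show ?thesis
  proof
    assume k: "k \<in> {1..m_index d}"
    have mn: "Max M \<le> length d" "1 \<le> Max M" "int (d!(Max M - 1)) \<ge> int (Max M) - 1"
      using MM unfolding M_def dd_def by auto
    have lt: "Max M - 1 < length d" using mn(1,2) by linarith
    have le: "k - 1 \<le> Max M - 1" using k mM by (simp add: diff_le_mono)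
    have "d!(Max M - 1) \<le> d!(k-1)" by (rule sorted_le[OF srt le lt])
    then show "1 \<le> k \<and> k \<le> length d \<and> k \<le> d!(k-1) + 1" using k mM mn by auto
  next
    assume k: "1 \<le> k \<and> k \<le> length d \<and> k \<le> d!(k-1) + 1"
    then have "k \<in> M" unfolding M_def dd_def by auto
    then have "k \<le> Max M" using fM by simp
    then show "k \<in> {1..m_index d}" using k mM by simp
  qed
qed

lemma conn_good:
  assumes srt: "sorted_wrt (\<ge>) d" and ne: "d \<noteq> []" and X: "X = g ` {..<length d}"
    and dg: "\<forall>i<length d. deg E X (g i) = d!i" and inj: "inj_on g {..<length d}"
    and k: "k \<in> {1..m_index d}"
  shows "good E X (g ` {..<k})"
proof -
  have kk: "1 \<le> k" "k \<le> length d" "k \<le> d!(k-1) + 1" using conn_m[OF srt ne] k by auto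
  have injk: "inj_on g {..<k}" using inj kk by (auto intro: inj_on_subset)
  have ck: "card (g ` {..<k}) = k" using injk by (simp add: card_image)
  show ?thesis unfolding good_def ck
  proof (intro conjI ballI)
    show "topset E X (g ` {..<k})" by (rule conn_top[OF srt X dg kk(2)])
    have "g 0 \<in> g ` {..<k}" using kk by auto
    then show "g ` {..<k} \<noteq> {}" by blast
  next
    fix a assume "a \<in> g ` {..<k}"
    then obtain i where i: "i < k" "a = g i" by auto
    have "d!(k-1) \<le> d!i" using sorted_le[OF srt, of i "k-1"] i kk by simp
    then show "k \<le> deg E X a + 1" using i kk dg by simp
  qed
qed

lemma conn_rev:
  assumes srt: "sorted_wrt (\<ge>) d" and ne: "d \<noteq> []" and X: "X = g ` {..<length d}"
    and dg: "\<forall>i<length d. deg E X (g i) = d!i" and inj: "inj_on g {..<length d}"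
    and gT: "good E X T"
  shows "card T \<in> {1..m_index d} \<and> delt E X T = Delta d (card T)"
proof -
  define k where "k = card T"
  have fX: "finite X" using X by simp
  have cX: "card X = length d" using X inj by (simp add: card_image)
  have T: "topset E X T" "T \<noteq> {}" "\<forall>a\<in>T. k \<le> deg E X a + 1" "T \<subseteq> X"
    using gT unfolding good_def topset_def k_def by auto
  have fT: "finite T" using T(4) fX by (auto intro: rev_finite_subset)
  have k1: "1 \<le> k" unfolding k_def using T(2) fT by (simp add: Suc_leI card_gt_0_iff)
  have kn: "k \<le> length d" unfolding k_def using card_mono[OF fX T(4)] cX by simp
  have injk: "inj_on g {..<k}" using inj kn by (auto intro: inj_on_subset)
  have ck: "card (g ` {..<k}) = k" using injk by (simp add: card_image)
  have S0: "topset E X (g ` {..<k})" by (rule conn_top[OF srt X dg kn])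
  have cc: "card (g ` {..<k}) = card T" using ck k_def by simp
  have dl: "delt E X T = Delta d k"
    using delt_inv[OF fX S0 T(1) cc] conn_delt[OF inj X dg kn] by simp
  have a: "g (k-1) \<in> g ` {..<k}" using k1 by auto
  have dga: "deg E X (g (k-1)) = d!(k-1)" using dg kn k1 by simp
  have "k \<le> d!(k-1) + 1"
  proof (cases "g (k-1) \<in> T")
    case True then show ?thesis using T(3) dga by force
  next
    case False
    then obtain b where "b \<in> T - g ` {..<k}" "deg E X b = deg E X (g (k-1))"
      using swap_lemma[OF fX S0 T(1) cc, of "g (k-1)"] a by blast
    then show ?thesis using T(3) dga by force
  qed
  then have "k \<in> {1..m_index d}" using conn_m[OF srt ne, of k] k1 kn by blast
  then show ?thesis using dl k_def by simp
qed

lemma dstar_ge: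
  assumes srt: "sorted_wrt (\<ge>) d" and ne: "d \<noteq> []" and X: "X = g ` {..<length d}"
    and dg: "\<forall>i<length d. deg E X (g i) = d!i" and inj: "inj_on g {..<length d}"
    and gT: "good E X T"
  shows "delt E X T \<le> Delta_star d"
proof -
  have c: "card T \<in> {1..m_index d}" "delt E X T = Delta d (card T)" using conn_rev[OF assms] by auto
  have "Delta d (card T) \<le> Max ((\<lambda>k. Delta d k) ` {1..m_index d})"
    using c(1) by (intro Max_ge) auto
  then show ?thesis using c(2) unfolding Delta_star_def by simp
qed

lemma dstar_att:
  assumes srt: "sorted_wrt (\<ge>) d" and ne: "d \<noteq> []" and X: "X = g ` {..<length d}"
    and dg: "\<forall>i<length d. deg E X (g i) = d!i" and inj: "inj_on g {..<length d}"
  shows "\<exists>T. good E X T \<and> delt E X T = Delta_star d"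
proof -
  have "1 \<le> length d" using ne by (cases d) auto
  then have "1 \<in> {1..m_index d}" using conn_m[OF srt ne, of 1] by simp
  then have "Max ((\<lambda>k. Delta d k) ` {1..m_index d}) \<in> (\<lambda>k. Delta d k) ` {1..m_index d}"
    by (intro Max_in) auto
  then obtain k where k: "k \<in> {1..m_index d}" "Delta_star d = Delta d k"
    unfolding Delta_star_def by auto
  have kn: "k \<le> length d" using conn_m[OF srt ne] k(1) by simp
  show ?thesis
    using conn_good[OF srt ne X dg inj k(1)] conn_delt[OF inj X dg kn] k(2) by auto
qed

theorem theorem13:
  fixes e d :: "nat list"
  assumes "degree_seq e" and "degree_seq d" and "rao_le e d"
  shows "Delta_star e \<le> Delta_star d"
proof -
  obtain H G f where HGf: "realizes H e" "realizes G d" "inj_on f {..<length e}"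
      "f ` {..<length e} \<subseteq> {..<length d}"
      "\<forall>i < length e. \<forall>j < length e. H i j \<longleftrightarrow> G (f i) (f j)"
    using assms(3) unfolding rao_le_def by blast
  have e: "e \<noteq> []" "sorted_wrt (\<ge>) e" using assms(1) unfolding degree_seq_def by auto
  have d: "d \<noteq> []" "sorted_wrt (\<ge>) d" using assms(2) unfolding degree_seq_def by auto
  have G: "\<forall>i j. G i j \<longrightarrow> i < length d \<and> j < length d" "\<forall>i j. G i j \<longrightarrow> G j i" "\<forall>i. \<not> G i i"
      "\<forall>i < length d. card {j. G i j} = d ! i"
    using HGf(2) unfolding realizes_def by auto
  have H: "\<forall>i j. H i j \<longrightarrow> i < length e \<and> j < length e" "\<forall>i < length e. card {j. H i j} = e ! i"
    using HGf(1) unfolding realizes_def by auto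
  define V where "V = {..<length d}"
  define U where "U = f ` {..<length e}"
  have Vid: "V = id ` {..<length d}" unfolding V_def by simp
  have dgd: "\<forall>i<length d. deg G V (id i) = d!i"
  proof (intro allI impI)
    fix i assume i: "i < length d"
    have "{u\<in>V. G i u} = {u. G i u}" using G(1) unfolding V_def by auto
    then show "deg G V (id i) = d!i" using G(4) i unfolding deg_def by simp
  qed
  have dge: "\<forall>i<length e. deg G U (f i) = e!i"
  proof (intro allI impI)
    fix i assume i: "i < length e"
    have "{u\<in>U. G (f i) u} = f ` {j\<in>{..<length e}. H i j}" using HGf(5) i unfolding U_def by auto
    moreover have "card (f ` {j\<in>{..<length e}. H i j}) = card {j\<in>{..<length e}. H i j}"
      using HGf(3) by (intro card_image) (auto intro: inj_on_subset)
    moreover have "{j\<in>{..<length e}. H i j} = {j. H i j}" using H(1) by auto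
    ultimately show "deg G U (f i) = e!i" using H(2) i unfolding deg_def by simp
  qed
  obtain S where S: "good G U S" "delt G U S = Delta_star e"
    using dstar_att[OF e(2) e(1) U_def dge HGf(3)] by blast
  have fV: "finite V" unfolding V_def by simp
  have UV: "U \<subseteq> V" using HGf(4) unfolding U_def V_def .
  obtain T where T: "good G V T" "delt G U S \<le> delt G V T"
    using main_ind[OF fV G(2) G(3) UV S(1)] by blast
  have "delt G V T \<le> Delta_star d"
    using dstar_ge[OF d(2) d(1) Vid dgd _ T(1)] by simp
  then show ?thesis using S(2) T(2) by simp
qed

end
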